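(* Fix $\kappa\in[0,1]$ and consider the optimization problem (SMOP2) $$\min_{(\mathbf a,\mathbf s)}\ f_\kappa(\bar{\mathbf a},\mathbf s):=\kappa\,\|\bar{\mathbf a}-\bar\zeta\|_2^2+(1-\kappa)\,\|\mathbf s\|_2^2$$ subject to $\mathbf z_i-\mathbf a_i=0$ and $\mathbf z_i\in\mathbb D_i$ for all $i\in[1:\mathcal I]$, and $(\bar{\mathbf a},\mathbf s)\in\mathbb S$, where $\bar{\mathbf a}=\frac1{\mathcal I}\sum_{i=1}^{\mathcal I}\mathbf a_i$. Then there exists an optimal solution $(\bar{\mathbf a}^\star,\mathbf s^\star)$ of (SMOP2). For $\kappa\in(0,1)$ this solution $(\bar{\mathbf a}^\star,\mathbf s^\star)$ is unique. Furthermore, for $\kappa=0$ the optimal value $h(\mathbf s^\star)=\|\mathbf s^\star\|_2^2$ is unique, and for $\kappa=1$ the optimal value $g(\bar{\mathbf a}^\star)=\|\bar{\mathbf a}^\star-\bar\zeta\|_2^2$ is unique; in particular, $\mathbf s^\star$ is unique for $\kappa=0$ and $\bar{\mathbf a}^\star$ is unique for $\kappa=1$.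
   Context: Setting (a network of $\mathcal I\in\mathbb N$ residential energy systems with batteries). Fix an integer horizon $N\ge 2$, a time $k\in\mathbb N_0$, a step length $T>0$, and write $[m:n]=\{m,m+1,\dots,n\}$. For each $i\in[1:\mathcal I]$ the following are given: constants $\alpha_i,\beta_i,\gamma_i\in(0,1]$, a capacity $C_i\ge0$, bounds $\underline u_i<0<\bar u_i$, an initial state $x_i(k)\in[0,C_i]$, and data $w_i(n)\in\mathbb R$ for $n\in[k:k+N-1]$. Let $\mathbb U_i$ be the set of $(u^-,u^+)\in\mathbb R^2$ with $\underline u_i\le u^-\le0$, $0\le u^+\le\bar u_i$ and $0\le u^-/\underline u_i+u^+/\bar u_i\le1$. Let $\mathbb D_i\subset\mathbb R^N$ be the set of vectors $\mathbf z_i=(z_i(k),\dots,z_i(k+N-1))^\top$ for which there exist $(u_i^-(n),u_i^+(n))\in\mathbb U_i$, $n\in[k:k+N-1]$, such that $x_i(n+1)=\alpha_i x_i(n)+T(\beta_iu_i^+(n)+u_i^-(n))\in[0,C_i]$ and $z_i(n)=w_i(n)+u_i^+(n)+\gamma_iu_i^-(n)$ for all $n\in[k:k+N-1]$. A reference vector $\bar\zeta\in\mathbb R^N$ and tube bounds $\underline{\mathbf c},\bar{\mathbf c}\in\mathbb R^N$ are given. Define $$\mathbb S=\Big\{(\bar{\mathbf z},\mathbf s)\in\mathbb R^N\times\mathbb R^{2N}_{\ge0}:\ \begin{pmatrix}I\\-I\end{pmatrix}\bar{\mathbf z}-\mathbf s\le\begin{pmatrix}\bar{\mathbf c}\\-\underline{\mathbf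 c}\end{pmatrix}\Big\}$$ (componentwise inequality, $I$ the $N\times N$ identity). The variables are $\mathbf a=(\mathbf a_1^\top,\dots,\mathbf a_{\mathcal I}^\top)^\top\in\mathbb R^{\mathcal IN}$ with $\mathbf a_i\in\mathbb R^N$, $\mathbf s\in\mathbb R^{2N}_{\ge0}$, and $\mathbf z_i\in\mathbb R^N$. *)

theory Defs
  imports Main "HOL-Analysis.Analysis"
begin

text \<open>Vectors in R^N are represented as functions nat => real; only the entries
  at the time indices n in the window {k..<k+N} matter.  The slack vector
  s in R^{2N} is represented by two nonnegative vectors (sp, sm): sp is the
  slack of the upper tube constraint, sm that of the lower one.\<close>

definition window :: "nat \<Rightarrow> nat \<Rightarrow> nat set" where
  "window k N = {k..<k+N}"

definition Uset :: "real \<Rightarrow> real \<Rightarrow> (real \<times> real) set" where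
  "Uset ul ub = {(um, up). ul \<le> um \<and> um \<le> 0 \<and> 0 \<le> up \<and> up \<le> ub \<and>
      0 \<le> um / ul + up / ub \<and> um / ul + up / ub \<le> 1}"

definition Dset :: "nat \<Rightarrow> nat \<Rightarrow> real \<Rightarrow> real \<Rightarrow> real \<Rightarrow> real \<Rightarrow> real \<Rightarrow> real \<Rightarrow> real
    \<Rightarrow> real \<Rightarrow> (nat \<Rightarrow> real) \<Rightarrow> (nat \<Rightarrow> real) set" where
  "Dset N k T \<alpha> \<beta> \<gamma> C ul ub x0 w =
     {z. \<exists>um up x. x k = x0 \<and>
        (\<forall>n\<in>window k N. (um n, up n) \<in> Uset ul ub \<and>
            x (n+1) = \<alpha> * x n + T * (\<beta> * up n + um n) \<and>
            0 \<le> x (n+1) \<and> x (n+1) \<le> C \<and>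
            z n = w n + up n + \<gamma> * um n)}"

definition avg :: "nat \<Rightarrow> (nat \<Rightarrow> nat \<Rightarrow> real) \<Rightarrow> nat \<Rightarrow> real" where
  "avg I a n = (1 / real I) * (\<Sum>i=1..I. a i n)"

definition Sset :: "nat \<Rightarrow> nat \<Rightarrow> (nat \<Rightarrow> real) \<Rightarrow> (nat \<Rightarrow> real) \<Rightarrow> (nat \<Rightarrow> real)
    \<Rightarrow> (nat \<Rightarrow> real) \<Rightarrow> (nat \<Rightarrow> real) \<Rightarrow> bool" where
  "Sset k N clb cub abar sp sm \<longleftrightarrow>
     (\<forall>n\<in>window k N. 0 \<le> sp n \<and> 0 \<le> sm n \<and>
        abar n - sp n \<le> cub n \<and> - abar n - sm n \<le> - clb n)"

definition gfun :: "nat \<Rightarrow> nat \<Rightarrow> (nat \<Rightarrow> real) \<Rightarrow> (nat \<Rightarrow> real) \<Rightarrow> real" where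
  "gfun k N \<zeta> abar = (\<Sum>n\<in>window k N. (abar n - \<zeta> n)^2)"

definition hfun :: "nat \<Rightarrow> nat \<Rightarrow> (nat \<Rightarrow> real) \<Rightarrow> (nat \<Rightarrow> real) \<Rightarrow> real" where
  "hfun k N sp sm = (\<Sum>n\<in>window k N. (sp n)^2 + (sm n)^2)"

definition fobj :: "real \<Rightarrow> nat \<Rightarrow> nat \<Rightarrow> (nat \<Rightarrow> real) \<Rightarrow> (nat \<Rightarrow> real)
    \<Rightarrow> (nat \<Rightarrow> real) \<Rightarrow> (nat \<Rightarrow> real) \<Rightarrow> real" where
  "fobj \<kappa> k N \<zeta> abar sp sm = \<kappa> * gfun k N \<zeta> abar + (1 - \<kappa>) * hfun k N sp sm"

definition feasible :: "nat \<Rightarrow> nat \<Rightarrow> real \<Rightarrow> nat \<Rightarrow> (nat \<Rightarrow> real) \<Rightarrow> (nat \<Rightarrow> real)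
    \<Rightarrow> (nat \<Rightarrow> real) \<Rightarrow> (nat \<Rightarrow> real) \<Rightarrow> (nat \<Rightarrow> real) \<Rightarrow> (nat \<Rightarrow> real) \<Rightarrow> (nat \<Rightarrow> real)
    \<Rightarrow> (nat \<Rightarrow> nat \<Rightarrow> real) \<Rightarrow> (nat \<Rightarrow> real) \<Rightarrow> (nat \<Rightarrow> real)
    \<Rightarrow> (nat \<Rightarrow> nat \<Rightarrow> real) \<Rightarrow> (nat \<Rightarrow> real) \<Rightarrow> (nat \<Rightarrow> real) \<Rightarrow> bool" where
  "feasible N k T I \<alpha> \<beta> \<gamma> C ul ub x0 w clb cub a sp sm \<longleftrightarrow>
     (\<exists>z. \<forall>i\<in>{1..I}. z i \<in> Dset N k T (\<alpha> i) (\<beta> i) (\<gamma> i) (C i) (ul i) (ub i) (x0 i) (w i) \<and>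
            (\<forall>n\<in>window k N. z i n - a i n = 0)) \<and>
     Sset k N clb cub (avg I a) sp sm"

definition optimal :: "real \<Rightarrow> nat \<Rightarrow> nat \<Rightarrow> real \<Rightarrow> nat \<Rightarrow> (nat \<Rightarrow> real) \<Rightarrow> (nat \<Rightarrow> real)
    \<Rightarrow> (nat \<Rightarrow> real) \<Rightarrow> (nat \<Rightarrow> real) \<Rightarrow> (nat \<Rightarrow> real) \<Rightarrow> (nat \<Rightarrow> real) \<Rightarrow> (nat \<Rightarrow> real)
    \<Rightarrow> (nat \<Rightarrow> nat \<Rightarrow> real) \<Rightarrow> (nat \<Rightarrow> real) \<Rightarrow> (nat \<Rightarrow> real) \<Rightarrow> (nat \<Rightarrow> real)
    \<Rightarrow> (nat \<Rightarrow> nat \<Rightarrow> real) \<Rightarrow> (nat \<Rightarrow> real) \<Rightarrow> (nat \<Rightarrow> real) \<Rightarrow> bool" where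
  "optimal \<kappa> N k T I \<alpha> \<beta> \<gamma> C ul ub x0 w \<zeta> clb cub a sp sm \<longleftrightarrow>
     feasible N k T I \<alpha> \<beta> \<gamma> C ul ub x0 w clb cub a sp sm \<and>
     (\<forall>a' sp' sm'. feasible N k T I \<alpha> \<beta> \<gamma> C ul ub x0 w clb cub a' sp' sm' \<longrightarrow>
        fobj \<kappa> k N \<zeta> (avg I a) sp sm \<le> fobj \<kappa> k N \<zeta> (avg I a') sp' sm')"

end

theory Submission
  imports Defs "HOL-Analysis.Analysis"
begin


lemma mid_le1: "(x::real) - u \<le> c \<Longrightarrow> y - v \<le> c \<Longrightarrow> (x+y)/2 - (u+v)/2 \<le> c"
  by (simp add: field_simps)
lemma mid_le2: "- (x::real) - u \<le> c \<Longrightarrow> - y - v \<le> c \<Longrightarrow> - ((x+y)/2) - (u+v)/2 \<le> c"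
  by (simp add: field_simps)

lemma Uset_mid:
  assumes "(um1, up1) \<in> Uset ul ub" "(um2, up2) \<in> Uset ul ub" "ul < 0" "0 < ub"
  shows "((um1 + um2)/2, (up1 + up2)/2) \<in> Uset ul ub"
proof -
  have e: "(um1 + um2) / 2 / ul + (up1 + up2) / 2 / ub = ((um1/ul + up1/ub) + (um2/ul + up2/ub))/2"
    using assms(3,4) by (simp add: field_simps)
  have "ul \<le> um1" "um1 \<le> 0" "0 \<le> up1" "up1 \<le> ub" "0 \<le> um1 / ul + up1 / ub" "um1 / ul + up1 / ub \<le> 1"
    "ul \<le> um2" "um2 \<le> 0" "0 \<le> up2" "up2 \<le> ub" "0 \<le> um2 / ul + up2 / ub" "um2 / ul + up2 / ub \<le> 1"
    using assms(1,2) unfolding Uset_def by auto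
  moreover have "\<And>s1 s2::real. 0 \<le> s1 \<Longrightarrow> s1 \<le> 1 \<Longrightarrow> 0 \<le> s2 \<Longrightarrow> s2 \<le> 1 \<Longrightarrow> 0 \<le> (s1+s2)/2 \<and> (s1+s2)/2 \<le> 1"
    by auto
  ultimately show ?thesis unfolding Uset_def mem_Collect_eq case_prod_conv e by simp
qed

lemma Dset_mid:
  assumes "z1 \<in> Dset N k T \<alpha> \<beta> \<gamma> C ul ub x0 w" "z2 \<in> Dset N k T \<alpha> \<beta> \<gamma> C ul ub x0 w" "ul < 0" "0 < ub"
  shows "(\<lambda>n. (z1 n + z2 n)/2) \<in> Dset N k T \<alpha> \<beta> \<gamma> C ul ub x0 w"
proof -
  obtain um1 up1 x1 where h1: "x1 k = x0" "\<forall>n\<in>window k N. (um1 n, up1 n) \<in> Uset ul ub \<and>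
            x1 (n+1) = \<alpha> * x1 n + T * (\<beta> * up1 n + um1 n) \<and>
            0 \<le> x1 (n+1) \<and> x1 (n+1) \<le> C \<and>
            z1 n = w n + up1 n + \<gamma> * um1 n" using assms(1) unfolding Dset_def by blast
  obtain um2 up2 x2 where h2: "x2 k = x0" "\<forall>n\<in>window k N. (um2 n, up2 n) \<in> Uset ul ub \<and>
            x2 (n+1) = \<alpha> * x2 n + T * (\<beta> * up2 n + um2 n) \<and>
            0 \<le> x2 (n+1) \<and> x2 (n+1) \<le> C \<and>
            z2 n = w n + up2 n + \<gamma> * um2 n" using assms(2) unfolding Dset_def by blast
  show ?thesis unfolding Dset_def mem_Collect_eq
    apply (rule exI[of _ "\<lambda>n. (um1 n + um2 n)/2"], rule exI[of _ "\<lambda>n. (up1 n + up2 n)/2"],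
      rule exI[of _ "\<lambda>n. (x1 n + x2 n)/2"])
  proof (intro conjI ballI)
    show "(x1 k + x2 k) / 2 = x0" using h1 h2 by simp
    fix n assume n: "n \<in> window k N"
    show "((um1 n + um2 n) / 2, (up1 n + up2 n) / 2) \<in> Uset ul ub"
      using h1(2) h2(2) n assms(3,4) Uset_mid[of "um1 n" "up1 n" ul ub "um2 n" "up2 n"] by blast
    show "(x1 (n + 1) + x2 (n + 1)) / 2 = \<alpha> * ((x1 n + x2 n) / 2) + T * (\<beta> * ((up1 n + up2 n) / 2) + (um1 n + um2 n) / 2)"
      using h1(2) h2(2) n by (simp add: field_simps)
    have "0 \<le> x1 (n+1)" "0 \<le> x2 (n+1)" "x1 (n+1) \<le> C" "x2 (n+1) \<le> C" using h1(2) h2(2) n by blast+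
    then show "0 \<le> (x1 (n + 1) + x2 (n + 1)) / 2" "(x1 (n + 1) + x2 (n + 1)) / 2 \<le> C" by simp_all
    show "(z1 n + z2 n) / 2 = w n + (up1 n + up2 n) / 2 + \<gamma> * ((um1 n + um2 n) / 2)"
      using h1(2) h2(2) n by (simp add: field_simps)
  qed
qed

lemma avg_mid: "avg I (\<lambda>i n. (a i n + a' i n)/2) n = (avg I a n + avg I a' n)/2"
proof -
  have "(\<Sum>i=1..I. (a i n + a' i n)/2) = ((\<Sum>i=1..I. a i n) + (\<Sum>i=1..I. a' i n))/2"
    by (simp add: sum.distrib sum_divide_distrib[symmetric])
  then show ?thesis unfolding avg_def by (simp add: distrib_left add_divide_distrib)
qed

lemma feasible_mid:
  assumes "feasible N k T I \<alpha> \<beta> \<gamma> C ul ub x0 w clb cub a sp sm"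
    "feasible N k T I \<alpha> \<beta> \<gamma> C ul ub x0 w clb cub a' sp' sm'"
    "\<forall>i\<in>{1..I}. ul i < 0 \<and> 0 < ub i"
  shows "feasible N k T I \<alpha> \<beta> \<gamma> C ul ub x0 w clb cub (\<lambda>i n. (a i n + a' i n)/2)
           (\<lambda>n. (sp n + sp' n)/2) (\<lambda>n. (sm n + sm' n)/2)"
proof -
  obtain z where z: "\<forall>i\<in>{1..I}. z i \<in> Dset N k T (\<alpha> i) (\<beta> i) (\<gamma> i) (C i) (ul i) (ub i) (x0 i) (w i) \<and>
            (\<forall>n\<in>window k N. z i n - a i n = 0)" and S1: "Sset k N clb cub (avg I a) sp sm"
    using assms(1) unfolding feasible_def by blast
  obtain z' where z': "\<forall>i\<in>{1..I}. z' i \<in> Dset N k T (\<alpha> i) (\<beta> i) (\<gamma> i) (C i) (ul i) (ub i) (x0 i) (w i) \<and>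
            (\<forall>n\<in>window k N. z' i n - a' i n = 0)" and S2: "Sset k N clb cub (avg I a') sp' sm'"
    using assms(2) unfolding feasible_def by blast
  show ?thesis unfolding feasible_def
  proof (intro conjI exI[of _ "\<lambda>i n. (z i n + z' i n)/2"] ballI)
    fix i assume i: "i \<in> {1..I}"
    show "(\<lambda>n. (z i n + z' i n) / 2) \<in> Dset N k T (\<alpha> i) (\<beta> i) (\<gamma> i) (C i) (ul i) (ub i) (x0 i) (w i)"
      using Dset_mid[of "z i" N k T "\<alpha> i" "\<beta> i" "\<gamma> i" "C i" "ul i" "ub i" "x0 i" "w i" "z' i"] z z' i assms(3) by blast
    show "(z i n + z' i n) / 2 - (a i n + a' i n) / 2 = 0" if "n \<in> window k N" for n
      using z z' i that by auto
  next
    show "Sset k N clb cub (avg I (\<lambda>i n. (a i n + a' i n) / 2)) (\<lambda>n. (sp n + sp' n) / 2) (\<lambda>n. (sm n + sm' n) / 2)"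
      unfolding Sset_def avg_mid
    proof (intro ballI)
      fix n assume n: "n \<in> window k N"
      have f: "0 \<le> sp n" "0 \<le> sm n" "avg I a n - sp n \<le> cub n" "- avg I a n - sm n \<le> - clb n"
        "0 \<le> sp' n" "0 \<le> sm' n" "avg I a' n - sp' n \<le> cub n" "- avg I a' n - sm' n \<le> - clb n"
        using S1 S2 n unfolding Sset_def by auto
      show "0 \<le> (sp n + sp' n) / 2 \<and> 0 \<le> (sm n + sm' n) / 2 \<and>
        (avg I a n + avg I a' n) / 2 - (sp n + sp' n) / 2 \<le> cub n \<and> - ((avg I a n + avg I a' n) / 2) - (sm n + sm' n) / 2 \<le> - clb n"
        using f mid_le1[OF f(3) f(7)] mid_le2[OF f(4) f(8)] by simp
    qed
  qed
qed

lemma fobj_mid: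
  "fobj \<kappa> k N \<zeta> (\<lambda>n. (A n + B n)/2) (\<lambda>n. (sp n + sp' n)/2) (\<lambda>n. (sm n + sm' n)/2)
   = (fobj \<kappa> k N \<zeta> A sp sm + fobj \<kappa> k N \<zeta> B sp' sm')/2
     - \<kappa>/4 * (\<Sum>n\<in>window k N. (A n - B n)^2)
     - (1-\<kappa>)/4 * (\<Sum>n\<in>window k N. (sp n - sp' n)^2 + (sm n - sm' n)^2)"
proof -
  have g: "gfun k N \<zeta> (\<lambda>n. (A n + B n)/2) = (gfun k N \<zeta> A + gfun k N \<zeta> B)/2 - (\<Sum>n\<in>window k N. (A n - B n)^2)/4"
  proof -
    have "\<And>n. ((A n + B n)/2 - \<zeta> n)^2 = ((A n - \<zeta> n)^2 + (B n - \<zeta> n)^2)/2 - (A n - B n)^2/4"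
      by (simp add: power2_eq_square field_simps)
    then show ?thesis unfolding gfun_def
      by (simp add: sum_subtractf sum_divide_distrib[symmetric] sum.distrib)
  qed
  have h: "hfun k N (\<lambda>n. (sp n + sp' n)/2) (\<lambda>n. (sm n + sm' n)/2) = (hfun k N sp sm + hfun k N sp' sm')/2 - (\<Sum>n\<in>window k N. (sp n - sp' n)^2 + (sm n - sm' n)^2)/4"
  proof -
    have "\<And>n. ((sp n + sp' n)/2)^2 + ((sm n + sm' n)/2)^2 = ((sp n^2 + sm n^2) + (sp' n^2 + sm' n^2))/2 - ((sp n - sp' n)^2 + (sm n - sm' n)^2)/4"
      by (simp add: power2_eq_square field_simps)
    then show ?thesis unfolding hfun_def
      by (simp add: sum_subtractf sum_divide_distrib[symmetric] sum.distrib)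
  qed
  show ?thesis unfolding fobj_def g h by (simp add: field_simps)
qed



lemma Dset_choice:
  assumes "\<forall>i\<in>A. z i \<in> Dset N k T (\<alpha> i) (\<beta> i) (\<gamma> i) (C i) (ul i) (ub i) (x0 i) (w i)"
  shows "\<exists>UM UP X. \<forall>i\<in>A. X i k = x0 i \<and> (\<forall>n\<in>window k N. (UM i n, UP i n) \<in> Uset (ul i) (ub i) \<and>
     X i (n+1) = \<alpha> i * X i n + T * (\<beta> i * UP i n + UM i n) \<and> 0 \<le> X i (n+1) \<and> X i (n+1) \<le> C i \<and>
     z i n = w i n + UP i n + \<gamma> i * UM i n)"
proof -
  let ?P = "\<lambda>i um up x. x k = x0 i \<and> (\<forall>n\<in>window k N. (um n, up n) \<in> Uset (ul i) (ub i) \<and>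
     x (n+1) = \<alpha> i * x n + T * (\<beta> i * up n + um n) \<and> 0 \<le> x (n+1) \<and> x (n+1) \<le> C i \<and>
     z i n = w i n + up n + \<gamma> i * um n)"
  have "\<forall>i\<in>A. \<exists>um. \<exists>up. \<exists>x. ?P i um up x" using assms unfolding Dset_def by blast
  then have "\<exists>UM. \<forall>i\<in>A. \<exists>up. \<exists>x. ?P i (UM i) up x" by (rule bchoice)
  then obtain UM where "\<forall>i\<in>A. \<exists>up. \<exists>x. ?P i (UM i) up x" ..
  then have "\<exists>UP. \<forall>i\<in>A. \<exists>x. ?P i (UM i) (UP i) x" by (rule bchoice)
  then obtain UP where "\<forall>i\<in>A. \<exists>x. ?P i (UM i) (UP i) x" ..
  then have "\<exists>X. \<forall>i\<in>A. ?P i (UM i) (UP i) (X i)" by (rule bchoice)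
  then obtain X where "\<forall>i\<in>A. ?P i (UM i) (UP i) (X i)" ..
  then show ?thesis by (intro exI)
qed

lemma continuous_on_coord [continuous_intros]: "continuous_on S (\<lambda>v::'a \<Rightarrow> 'b::topological_space. v j)"
  by (rule continuous_on_subset[OF continuous_on_product_coordinates]) simp

lemma compact_PiE_UNIV:
  fixes S :: "'a \<Rightarrow> 'b::topological_space set"
  assumes "\<And>j. compact (S j)"
  shows "compact (PiE UNIV S)"
proof -
  have "compactin (product_topology (\<lambda>i. euclidean) UNIV) (PiE UNIV S)"
    using assms by (simp add: compactin_PiE)
  then show ?thesis by (simp add: euclidean_product_topology)
qed

lemma hfun_mono:
  assumes "\<forall>n\<in>window k N. 0 \<le> p n \<and> p n \<le> p' n \<and> 0 \<le> q n \<and> q n \<le> q' n"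
  shows "hfun k N p q \<le> hfun k N p' q'"
  unfolding hfun_def
proof (rule sum_mono)
  fix n assume "n \<in> window k N"
  then have "0 \<le> p n" "p n \<le> p' n" "0 \<le> q n" "q n \<le> q' n" using assms by auto
  then show "(p n)\<^sup>2 + (q n)\<^sup>2 \<le> (p' n)\<^sup>2 + (q' n)\<^sup>2"
    by (intro add_mono power_mono)
qed



definition inJ :: "nat \<Rightarrow> nat \<Rightarrow> nat \<Rightarrow> nat \<times> nat \<times> nat \<Rightarrow> bool" where
  "inJ k N I j \<longleftrightarrow> (case j of (i, n, t) \<Rightarrow> i \<in> {1..I} \<and>
     ((t < 2 \<and> n \<in> window k N) \<or> (t = 2 \<and> n \<in> {k..k+N})))"

lemma existence:
  fixes N k I :: nat and T \<kappa> :: real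
    and \<alpha> \<beta> \<gamma> C ul ub x0 :: "nat \<Rightarrow> real" and w :: "nat \<Rightarrow> nat \<Rightarrow> real"
    and \<zeta> clb cub :: "nat \<Rightarrow> real"
  assumes A4: "\<forall>i\<in>{1..I}. 0 < \<alpha> i \<and> \<alpha> i \<le> 1 \<and> 0 < \<beta> i \<and> \<beta> i \<le> 1 \<and> 0 < \<gamma> i \<and> \<gamma> i \<le> 1"
    and A5: "\<forall>i\<in>{1..I}. 0 \<le> C i \<and> ul i < 0 \<and> 0 < ub i \<and> 0 \<le> x0 i \<and> x0 i \<le> C i"
    and K0: "0 \<le> \<kappa>" and K1: "\<kappa> \<le> 1"
  shows "\<exists>a sp sm. optimal \<kappa> N k T I \<alpha> \<beta> \<gamma> C ul ub x0 w \<zeta> clb cub a sp sm"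
proof -
  define W where "W = window k N"
  define M where "M i = ub i - ul i + C i" for i
  define K :: "(nat \<times> nat \<times> nat \<Rightarrow> real) set"
    where "K = PiE UNIV (\<lambda>j. if inJ k N I j then {-(M (fst j))..M (fst j)} else {0})"
  define Q :: "(nat \<times> nat \<times> nat \<Rightarrow> real) set"
    where "Q = (\<Inter>i\<in>{1..I}. {v. v (i,k,2) = x0 i} \<inter> (\<Inter>n\<in>W.
       {v. ul i \<le> v (i,n,0)} \<inter> {v. v (i,n,0) \<le> 0} \<inter> {v. 0 \<le> v (i,n,1)} \<inter> {v. v (i,n,1) \<le> ub i} \<inter>
       {v. 0 \<le> v (i,n,0) / ul i + v (i,n,1) / ub i} \<inter> {v. v (i,n,0) / ul i + v (i,n,1) / ub i \<le> 1} \<inter>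
       {v. v (i,n+1,2) = \<alpha> i * v (i,n,2) + T * (\<beta> i * v (i,n,1) + v (i,n,0))} \<inter>
       {v. 0 \<le> v (i,n+1,2)} \<inter> {v. v (i,n+1,2) \<le> C i}))"
  define P where "P = K \<inter> Q"
  have Qiff: "v \<in> Q \<longleftrightarrow> (\<forall>i\<in>{1..I}. v (i,k,2) = x0 i \<and> (\<forall>n\<in>W.
       ul i \<le> v (i,n,0) \<and> v (i,n,0) \<le> 0 \<and> 0 \<le> v (i,n,1) \<and> v (i,n,1) \<le> ub i \<and>
       0 \<le> v (i,n,0) / ul i + v (i,n,1) / ub i \<and> v (i,n,0) / ul i + v (i,n,1) / ub i \<le> 1 \<and>
       v (i,n+1,2) = \<alpha> i * v (i,n,2) + T * (\<beta> i * v (i,n,1) + v (i,n,0)) \<and>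
       0 \<le> v (i,n+1,2) \<and> v (i,n+1,2) \<le> C i))" for v
    unfolding Q_def by blast
  define aa where "aa v i n = w i n + v (i,n,1) + \<gamma> i * v (i,n,0)" for v :: "nat \<times> nat \<times> nat \<Rightarrow> real" and i n
  define av where "av v = avg I (aa v)" for v
  define spf where "spf v n = max 0 (av v n - cub n)" for v n
  define smf where "smf v n = max 0 (clb n - av v n)" for v n
  define \<Phi> where "\<Phi> v = fobj \<kappa> k N \<zeta> (av v) (spf v) (smf v)" for v

  have cK: "compact K" unfolding K_def by (rule compact_PiE_UNIV) auto
  have cQ: "closed Q" unfolding Q_def divide_inverse
    by (intro closed_INT ballI closed_Int closed_Collect_le closed_Collect_eq continuous_intros)
  have cP: "compact P" unfolding P_def using cK cQ by auto
  have contPhi: "continuous_on P \<Phi>"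
    unfolding \<Phi>_def fobj_def gfun_def hfun_def spf_def smf_def av_def avg_def aa_def
    by (intro continuous_intros)
  have Mb: "\<forall>i\<in>{1..I}. C i \<le> M i \<and> ub i \<le> M i \<and> - M i \<le> ul i"
    using A5 unfolding M_def by auto
  have pw: "0 \<le> x0 i * \<alpha> i ^ m \<and> x0 i * \<alpha> i ^ m \<le> C i" if i: "i \<in> {1..I}" for i m
  proof -
    have "0 \<le> \<alpha> i" "\<alpha> i \<le> 1" using bspec[OF A4 i] by auto
    then have "0 \<le> \<alpha> i ^ m" "\<alpha> i ^ m \<le> 1" by (auto intro: power_le_one)
    moreover have "0 \<le> x0 i" "x0 i \<le> C i" using bspec[OF A5 i] by auto
    ultimately show ?thesis using mult_left_le[of "\<alpha> i ^ m" "x0 i"] by auto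
  qed
  define v0 :: "nat \<times> nat \<times> nat \<Rightarrow> real"
    where "v0 = (\<lambda>(i,n,t). if inJ k N I (i,n,t) \<and> t = 2 then x0 i * \<alpha> i ^ (n - k) else 0)"
  have "v0 \<in> K"
  proof -
    have "v0 j \<in> (if inJ k N I j then {-(M (fst j))..M (fst j)} else {0})" for j
    proof (cases j)
      case (fields i n t)
      show ?thesis
      proof (cases "inJ k N I j")
        case True
        then have i: "i \<in> {1..I}" using fields by (simp add: inJ_def)
        have "0 \<le> v0 j \<and> v0 j \<le> C i" using pw[OF i, of "n-k"] fields by (simp add: v0_def)
        then show ?thesis using True Mb i fields by force
      qed (simp add: v0_def fields)
    qed
    then show ?thesis unfolding K_def by (simp add: PiE_iff)
  qed
  moreover have "v0 \<in> Q" unfolding Qiff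
  proof (intro ballI conjI)
    fix i assume i: "i \<in> {1..I}"
    show "v0 (i,k,2) = x0 i" using i by (auto simp: v0_def inJ_def)
    fix n assume n: "n \<in> W"
    have z: "v0 (i,n,0) = 0" "v0 (i,n,1) = 0" by (auto simp: v0_def)
    show "ul i \<le> v0 (i,n,0)" "v0 (i,n,0) \<le> 0" "0 \<le> v0 (i,n,1)" "v0 (i,n,1) \<le> ub i"
      "0 \<le> v0 (i,n,0) / ul i + v0 (i,n,1) / ub i" "v0 (i,n,0) / ul i + v0 (i,n,1) / ub i \<le> 1"
      using bspec[OF A5 i] unfolding z by auto
    have "n+1-k = Suc (n-k)" using n by (auto simp: W_def window_def)
    then show "v0 (i,n+1,2) = \<alpha> i * v0 (i,n,2) + T * (\<beta> i * v0 (i,n,1) + v0 (i,n,0))"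
      using i n unfolding z by (auto simp: v0_def inJ_def W_def window_def)
    show "0 \<le> v0 (i,n+1,2)" "v0 (i,n+1,2) \<le> C i"
      using pw[OF i, of "n+1-k"] bspec[OF A5 i] by (auto simp: v0_def)
  qed
  ultimately have "P \<noteq> {}" unfolding P_def by auto
  then obtain vs where vsP: "vs \<in> P" and vsmin: "\<forall>v\<in>P. \<Phi> vs \<le> \<Phi> v"
    using continuous_attains_inf[OF cP _ contPhi] by blast
  from vsP have vsQ: "vs \<in> Q" unfolding P_def by auto
  define as where "as = aa vs"
  have avs: "avg I as = av vs" unfolding as_def av_def ..
  have feas: "feasible N k T I \<alpha> \<beta> \<gamma> C ul ub x0 w clb cub as (spf vs) (smf vs)"
    unfolding feasible_def
  proof (intro conjI exI[of _ as] ballI)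
    fix i assume i: "i \<in> {1..I}"
    show "as i n - as i n = 0" if "n \<in> window k N" for n by simp
    show "as i \<in> Dset N k T (\<alpha> i) (\<beta> i) (\<gamma> i) (C i) (ul i) (ub i) (x0 i) (w i)"
      unfolding Dset_def mem_Collect_eq
      apply (rule exI[of _ "\<lambda>n. vs (i,n,0)"], rule exI[of _ "\<lambda>n. vs (i,n,1)"], rule exI[of _ "\<lambda>n. vs (i,n,2)"])
    proof (intro conjI ballI)
      have H: "vs (i,k,2) = x0 i \<and> (\<forall>n\<in>W.
       ul i \<le> vs (i,n,0) \<and> vs (i,n,0) \<le> 0 \<and> 0 \<le> vs (i,n,1) \<and> vs (i,n,1) \<le> ub i \<and>
       0 \<le> vs (i,n,0) / ul i + vs (i,n,1) / ub i \<and> vs (i,n,0) / ul i + vs (i,n,1) / ub i \<le> 1 \<and>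
       vs (i,n+1,2) = \<alpha> i * vs (i,n,2) + T * (\<beta> i * vs (i,n,1) + vs (i,n,0)) \<and>
       0 \<le> vs (i,n+1,2) \<and> vs (i,n+1,2) \<le> C i)" using vsQ i unfolding Qiff by blast
      then show "vs (i,k,2) = x0 i" by blast
      fix n assume n: "n \<in> window k N"
      then have n': "n \<in> W" by (simp add: W_def)
      show "(vs (i,n,0), vs (i,n,1)) \<in> Uset (ul i) (ub i)" unfolding Uset_def using H n' by blast
      show "vs (i,n+1,2) = \<alpha> i * vs (i,n,2) + T * (\<beta> i * vs (i,n,1) + vs (i,n,0))" using H n' by blast
      show "0 \<le> vs (i,n+1,2)" "vs (i,n+1,2) \<le> C i" using H n' by blast+
      show "as i n = w i n + vs (i,n,1) + \<gamma> i * vs (i,n,0)" by (simp add: as_def aa_def)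
    qed
  next
    show "Sset k N clb cub (avg I as) (spf vs) (smf vs)"
      unfolding Sset_def avs spf_def smf_def by auto
  qed
  have "optimal \<kappa> N k T I \<alpha> \<beta> \<gamma> C ul ub x0 w \<zeta> clb cub as (spf vs) (smf vs)"
    unfolding optimal_def
  proof (intro conjI allI impI feas)
    fix a' sp' sm' assume f': "feasible N k T I \<alpha> \<beta> \<gamma> C ul ub x0 w clb cub a' sp' sm'"
    then obtain z where z: "\<forall>i\<in>{1..I}. z i \<in> Dset N k T (\<alpha> i) (\<beta> i) (\<gamma> i) (C i) (ul i) (ub i) (x0 i) (w i) \<and>
            (\<forall>n\<in>window k N. z i n - a' i n = 0)" and S': "Sset k N clb cub (avg I a') sp' sm'"
      unfolding feasible_def by blast
    have zD: "\<forall>i\<in>{1..I}. z i \<in> Dset N k T (\<alpha> i) (\<beta> i) (\<gamma> i) (C i) (ul i) (ub i) (x0 i) (w i)"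
      using z by blast
    from Dset_choice[OF zD] obtain UM UP X where UX: "\<forall>i\<in>{1..I}. X i k = x0 i \<and> (\<forall>n\<in>window k N. (UM i n, UP i n) \<in> Uset (ul i) (ub i) \<and>
     X i (n+1) = \<alpha> i * X i n + T * (\<beta> i * UP i n + UM i n) \<and> 0 \<le> X i (n+1) \<and> X i (n+1) \<le> C i \<and>
     z i n = w i n + UP i n + \<gamma> i * UM i n)"
      by blast
    have Xb: "0 \<le> X i n \<and> X i n \<le> C i" if i: "i \<in> {1..I}" and n: "n \<in> {k..k+N}" for i n
    proof (cases "n = k")
      case True then show ?thesis using bspec[OF UX i] bspec[OF A5 i] by auto
    next
      case False
      then have "n - 1 \<in> window k N" "n = (n-1)+1" using n by (auto simp: window_def)
      then show ?thesis using bspec[OF UX i] by metis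
    qed
    define v' :: "nat \<times> nat \<times> nat \<Rightarrow> real" where "v' = (\<lambda>(i,n,t). if i \<in> {1..I} then
      (if t = 0 \<and> n \<in> W then UM i n else if t = 1 \<and> n \<in> W then UP i n
       else if t = 2 \<and> n \<in> {k..k+N} then X i n else 0) else 0)"
    have "v' \<in> K"
    proof -
      have "v' j \<in> (if inJ k N I j then {-(M (fst j))..M (fst j)} else {0})" for j
      proof (cases j)
        case (fields i n t)
        show ?thesis
        proof (cases "inJ k N I j")
          case True
          then have i: "i \<in> {1..I}" and tn: "(t < 2 \<and> n \<in> W) \<or> (t = 2 \<and> n \<in> {k..k+N})"
            using fields by (auto simp: inJ_def W_def)
          have "- M i \<le> v' j \<and> v' j \<le> M i"
          proof (cases "t = 2")
            case True
            then have nn: "n \<in> {k..k+N}" using tn by auto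
            have "0 \<le> X i n" "X i n \<le> C i" using Xb[OF i nn] by auto
            moreover have "v' j = X i n" using True fields i nn by (simp add: v'_def)
            ultimately show ?thesis using bspec[OF Mb i] bspec[OF A5 i] by auto
          next
            case False
            then have n: "n \<in> W" and t: "t = 0 \<or> t = 1" using tn by auto
            have "(UM i n, UP i n) \<in> Uset (ul i) (ub i)" using bspec[OF UX i] n by (auto simp: W_def)
            then have "ul i \<le> UM i n \<and> UM i n \<le> 0 \<and> 0 \<le> UP i n \<and> UP i n \<le> ub i" by (auto simp: Uset_def)
            then show ?thesis using t n fields i bspec[OF Mb i] bspec[OF A5 i] by (auto simp: v'_def)
          qed
          then show ?thesis using True fields by simp
        next
          case False
          then show ?thesis using fields by (auto simp: v'_def inJ_def W_def)
        qed
      qed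
      then show ?thesis unfolding K_def by (simp add: PiE_iff)
    qed
    moreover have "v' \<in> Q" unfolding Qiff
    proof (intro ballI)
      fix i assume i: "i \<in> {1..I}"
      have nW: "n \<in> W \<Longrightarrow> n \<in> {k..k+N} \<and> n + 1 \<in> {k..k+N}" for n by (auto simp: W_def window_def)
      have kk: "k \<in> {k..k+N}" by simp
      show "v' (i,k,2) = x0 i \<and> (\<forall>n\<in>W.
       ul i \<le> v' (i,n,0) \<and> v' (i,n,0) \<le> 0 \<and> 0 \<le> v' (i,n,1) \<and> v' (i,n,1) \<le> ub i \<and>
       0 \<le> v' (i,n,0) / ul i + v' (i,n,1) / ub i \<and> v' (i,n,0) / ul i + v' (i,n,1) / ub i \<le> 1 \<and>
       v' (i,n+1,2) = \<alpha> i * v' (i,n,2) + T * (\<beta> i * v' (i,n,1) + v' (i,n,0)) \<and>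
       0 \<le> v' (i,n+1,2) \<and> v' (i,n+1,2) \<le> C i)"
        using bspec[OF UX i] i nW kk unfolding W_def by (auto simp: v'_def Uset_def W_def)
    qed
    ultimately have v'P: "v' \<in> P" unfolding P_def by auto
    have avv: "av v' n = avg I a' n" if n: "n \<in> W" for n
      unfolding av_def avg_def
    proof (intro arg_cong[where f = "\<lambda>x. 1 / real I * x"] sum.cong refl)
      fix i assume i: "i \<in> {1..I}"
      then show "aa v' i n = a' i n" using bspec[OF UX i] bspec[OF z i] n
        by (auto simp: aa_def v'_def W_def)
    qed
    have "\<Phi> vs \<le> \<Phi> v'" using vsmin v'P by blast
    also have "\<Phi> v' = \<kappa> * gfun k N \<zeta> (avg I a') + (1 - \<kappa>) * hfun k N (spf v') (smf v')"
    proof -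
      have "gfun k N \<zeta> (av v') = gfun k N \<zeta> (avg I a')"
        unfolding gfun_def using avv by (auto simp: W_def intro!: sum.cong)
      then show ?thesis unfolding \<Phi>_def fobj_def by simp
    qed
    also have "\<dots> \<le> \<kappa> * gfun k N \<zeta> (avg I a') + (1 - \<kappa>) * hfun k N sp' sm'"
    proof -
      have "hfun k N (spf v') (smf v') \<le> hfun k N sp' sm'"
      proof (rule hfun_mono, intro ballI)
        fix n assume n: "n \<in> window k N"
        then have "0 \<le> sp' n" "0 \<le> sm' n" "avg I a' n - sp' n \<le> cub n" "- avg I a' n - sm' n \<le> - clb n"
          using S' unfolding Sset_def by auto
        then show "0 \<le> spf v' n \<and> spf v' n \<le> sp' n \<and> 0 \<le> smf v' n \<and> smf v' n \<le> sm' n"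
          using avv[of n] n unfolding spf_def smf_def W_def by auto
      qed
      then show ?thesis using K1 by (simp add: mult_left_mono)
    qed
    finally show "fobj \<kappa> k N \<zeta> (avg I as) (spf vs) (smf vs) \<le> fobj \<kappa> k N \<zeta> (avg I a') sp' sm'"
      unfolding avs fobj_def[of _ _ _ _ "avg I a'"] \<Phi>_def .
  qed
  then show ?thesis by blast
qed



lemma uniq_core:
  assumes o1: "optimal \<kappa> N k T I \<alpha> \<beta> \<gamma> C ul ub x0 w \<zeta> clb cub a sp sm"
    and o2: "optimal \<kappa> N k T I \<alpha> \<beta> \<gamma> C ul ub x0 w \<zeta> clb cub a' sp' sm'"
    and U: "\<forall>i\<in>{1..I}. ul i < 0 \<and> 0 < ub i"
  shows "fobj \<kappa> k N \<zeta> (avg I a) sp sm = fobj \<kappa> k N \<zeta> (avg I a') sp' sm'"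
    and "\<kappa> * (\<Sum>n\<in>window k N. (avg I a n - avg I a' n)^2)
        + (1-\<kappa>) * (\<Sum>n\<in>window k N. (sp n - sp' n)^2 + (sm n - sm' n)^2) \<le> 0"
proof -
  have f1: "feasible N k T I \<alpha> \<beta> \<gamma> C ul ub x0 w clb cub a sp sm" using o1 unfolding optimal_def by blast
  have f2: "feasible N k T I \<alpha> \<beta> \<gamma> C ul ub x0 w clb cub a' sp' sm'" using o2 unfolding optimal_def by blast
  have le1: "fobj \<kappa> k N \<zeta> (avg I a) sp sm \<le> fobj \<kappa> k N \<zeta> (avg I a') sp' sm'"
    using o1 f2 unfolding optimal_def by blast
  have le2: "fobj \<kappa> k N \<zeta> (avg I a') sp' sm' \<le> fobj \<kappa> k N \<zeta> (avg I a) sp sm"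
    using o2 f1 unfolding optimal_def by blast
  then show eq: "fobj \<kappa> k N \<zeta> (avg I a) sp sm = fobj \<kappa> k N \<zeta> (avg I a') sp' sm'" using le1 by simp
  have fm: "feasible N k T I \<alpha> \<beta> \<gamma> C ul ub x0 w clb cub (\<lambda>i n. (a i n + a' i n)/2)
           (\<lambda>n. (sp n + sp' n)/2) (\<lambda>n. (sm n + sm' n)/2)"
    by (rule feasible_mid[OF f1 f2 U])
  have am: "avg I (\<lambda>i n. (a i n + a' i n)/2) = (\<lambda>n. (avg I a n + avg I a' n)/2)"
    by (rule ext) (rule avg_mid)
  have "fobj \<kappa> k N \<zeta> (avg I a) sp sm \<le> fobj \<kappa> k N \<zeta> (avg I (\<lambda>i n. (a i n + a' i n)/2))
           (\<lambda>n. (sp n + sp' n)/2) (\<lambda>n. (sm n + sm' n)/2)"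
    using o1 fm unfolding optimal_def by blast
  also have "\<dots> = (fobj \<kappa> k N \<zeta> (avg I a) sp sm + fobj \<kappa> k N \<zeta> (avg I a') sp' sm')/2
     - \<kappa>/4 * (\<Sum>n\<in>window k N. (avg I a n - avg I a' n)^2)
     - (1-\<kappa>)/4 * (\<Sum>n\<in>window k N. (sp n - sp' n)^2 + (sm n - sm' n)^2)"
    unfolding am by (rule fobj_mid)
  finally show "\<kappa> * (\<Sum>n\<in>window k N. (avg I a n - avg I a' n)^2)
        + (1-\<kappa>) * (\<Sum>n\<in>window k N. (sp n - sp' n)^2 + (sm n - sm' n)^2) \<le> 0"
    using eq by (simp add: field_simps)
qed

theorem proposition1:
  fixes N k I :: nat and T \<kappa> :: real
    and \<alpha> \<beta> \<gamma> C ul ub x0 :: "nat \<Rightarrow> real" and w :: "nat \<Rightarrow> nat \<Rightarrow> real"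
    and \<zeta> clb cub :: "nat \<Rightarrow> real"
  assumes "N \<ge> 2" and "T > 0" and "I \<ge> 1"
    and "\<forall>i\<in>{1..I}. 0 < \<alpha> i \<and> \<alpha> i \<le> 1 \<and> 0 < \<beta> i \<and> \<beta> i \<le> 1 \<and> 0 < \<gamma> i \<and> \<gamma> i \<le> 1"
    and "\<forall>i\<in>{1..I}. 0 \<le> C i \<and> ul i < 0 \<and> 0 < ub i \<and> 0 \<le> x0 i \<and> x0 i \<le> C i"
    and "0 \<le> \<kappa>" and "\<kappa> \<le> 1"
  shows "(\<exists>a sp sm. optimal \<kappa> N k T I \<alpha> \<beta> \<gamma> C ul ub x0 w \<zeta> clb cub a sp sm)
    \<and> (0 < \<kappa> \<and> \<kappa> < 1 \<longrightarrow>
        (\<forall>a sp sm a' sp' sm'. optimal \<kappa> N k T I \<alpha> \<beta> \<gamma> C ul ub x0 w \<zeta> clb cub a sp sm \<and>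
            optimal \<kappa> N k T I \<alpha> \<beta> \<gamma> C ul ub x0 w \<zeta> clb cub a' sp' sm' \<longrightarrow>
            (\<forall>n\<in>window k N. avg I a n = avg I a' n \<and> sp n = sp' n \<and> sm n = sm' n)))
    \<and> (\<kappa> = 0 \<longrightarrow>
        (\<forall>a sp sm a' sp' sm'. optimal \<kappa> N k T I \<alpha> \<beta> \<gamma> C ul ub x0 w \<zeta> clb cub a sp sm \<and>
            optimal \<kappa> N k T I \<alpha> \<beta> \<gamma> C ul ub x0 w \<zeta> clb cub a' sp' sm' \<longrightarrow>
            hfun k N sp sm = hfun k N sp' sm' \<and>
            (\<forall>n\<in>window k N. sp n = sp' n \<and> sm n = sm' n)))
    \<and> (\<kappa> = 1 \<longrightarrow>
        (\<forall>a sp sm a' sp' sm'. optimal \<kappa> N k T I \<alpha> \<beta> \<gamma> C ul ub x0 w \<zeta> clb cub a sp sm \<and>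
            optimal \<kappa> N k T I \<alpha> \<beta> \<gamma> C ul ub x0 w \<zeta> clb cub a' sp' sm' \<longrightarrow>
            gfun k N \<zeta> (avg I a) = gfun k N \<zeta> (avg I a') \<and>
            (\<forall>n\<in>window k N. avg I a n = avg I a' n)))"
proof -
  have U: "\<forall>i\<in>{1..I}. ul i < 0 \<and> 0 < ub i" using assms(5) by blast
  have fin: "finite (window k N)" by (simp add: window_def)
  have G0: "\<forall>n\<in>window k N. avg I a n = avg I a' n"
    if "0 < \<kappa>" "\<kappa> * (\<Sum>n\<in>window k N. (avg I a n - avg I a' n)^2)
        + (1-\<kappa>) * (\<Sum>n\<in>window k N. (sp n - sp' n)^2 + (sm n - sm' n)^2) \<le> 0"
    for a a' :: "nat \<Rightarrow> nat \<Rightarrow> real" and sp sp' sm sm' :: "nat \<Rightarrow> real"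
  proof -
    have h0: "0 \<le> (\<Sum>n\<in>window k N. (sp n - sp' n)^2 + (sm n - sm' n)^2)" by (intro sum_nonneg) auto
    have g0: "0 \<le> (\<Sum>n\<in>window k N. (avg I a n - avg I a' n)^2)" by (intro sum_nonneg) auto
    have "0 \<le> (1-\<kappa>) * (\<Sum>n\<in>window k N. (sp n - sp' n)^2 + (sm n - sm' n)^2)"
      using h0 assms(7) by simp
    then have "\<kappa> * (\<Sum>n\<in>window k N. (avg I a n - avg I a' n)^2) \<le> 0" using that(2) by simp
    then have "(\<Sum>n\<in>window k N. (avg I a n - avg I a' n)^2) = 0"
      using g0 that(1) by (simp add: mult_le_0_iff)
    then have "\<forall>n\<in>window k N. (avg I a n - avg I a' n)^2 = 0"
      using sum_nonneg_eq_0_iff[OF fin] by (simp add: sum_nonneg_eq_0_iff[OF fin])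
    then show ?thesis by simp
  qed
  have H0: "\<forall>n\<in>window k N. sp n = sp' n \<and> sm n = sm' n"
    if "\<kappa> < 1" "\<kappa> * (\<Sum>n\<in>window k N. (avg I a n - avg I a' n)^2)
        + (1-\<kappa>) * (\<Sum>n\<in>window k N. (sp n - sp' n)^2 + (sm n - sm' n)^2) \<le> 0"
    for a a' :: "nat \<Rightarrow> nat \<Rightarrow> real" and sp sp' sm sm' :: "nat \<Rightarrow> real"
  proof -
    have h0: "0 \<le> (\<Sum>n\<in>window k N. (sp n - sp' n)^2 + (sm n - sm' n)^2)" by (intro sum_nonneg) auto
    have g0: "0 \<le> (\<Sum>n\<in>window k N. (avg I a n - avg I a' n)^2)" by (intro sum_nonneg) auto
    have "0 \<le> \<kappa> * (\<Sum>n\<in>window k N. (avg I a n - avg I a' n)^2)"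
      using g0 assms(6) by simp
    then have "(1-\<kappa>) * (\<Sum>n\<in>window k N. (sp n - sp' n)^2 + (sm n - sm' n)^2) \<le> 0" using that(2) by simp
    then have "(\<Sum>n\<in>window k N. (sp n - sp' n)^2 + (sm n - sm' n)^2) = 0"
      using h0 that(1) by (simp add: mult_le_0_iff)
    then have "\<forall>n\<in>window k N. (sp n - sp' n)^2 + (sm n - sm' n)^2 = 0"
      by (simp add: sum_nonneg_eq_0_iff[OF fin] add_nonneg_nonneg)
    then show ?thesis by (simp add: sum_power2_eq_zero_iff)
  qed
  show ?thesis
  proof (intro conjI impI allI)
    show "\<exists>a sp sm. optimal \<kappa> N k T I \<alpha> \<beta> \<gamma> C ul ub x0 w \<zeta> clb cub a sp sm"
      by (rule existence[OF assms(4,5,6,7)])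
  next
    fix a sp sm a' sp' sm'
    assume "0 < \<kappa> \<and> \<kappa> < 1" and o: "optimal \<kappa> N k T I \<alpha> \<beta> \<gamma> C ul ub x0 w \<zeta> clb cub a sp sm \<and>
            optimal \<kappa> N k T I \<alpha> \<beta> \<gamma> C ul ub x0 w \<zeta> clb cub a' sp' sm'"
    then show "\<forall>n\<in>window k N. avg I a n = avg I a' n \<and> sp n = sp' n \<and> sm n = sm' n"
      using G0 H0 uniq_core(2)[OF _ _ U] by meson
  next
    fix a sp sm a' sp' sm'
    assume k: "\<kappa> = 0" and o: "optimal \<kappa> N k T I \<alpha> \<beta> \<gamma> C ul ub x0 w \<zeta> clb cub a sp sm \<and>
            optimal \<kappa> N k T I \<alpha> \<beta> \<gamma> C ul ub x0 w \<zeta> clb cub a' sp' sm'"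
    show "hfun k N sp sm = hfun k N sp' sm'"
      using uniq_core(1)[OF conjunct1[OF o] conjunct2[OF o] U] k by (simp add: fobj_def)
    show "\<forall>n\<in>window k N. sp n = sp' n \<and> sm n = sm' n"
      using H0[OF _ uniq_core(2)[OF conjunct1[OF o] conjunct2[OF o] U]] k by simp
  next
    fix a sp sm a' sp' sm'
    assume k: "\<kappa> = 1" and o: "optimal \<kappa> N k T I \<alpha> \<beta> \<gamma> C ul ub x0 w \<zeta> clb cub a sp sm \<and>
            optimal \<kappa> N k T I \<alpha> \<beta> \<gamma> C ul ub x0 w \<zeta> clb cub a' sp' sm'"
    show "gfun k N \<zeta> (avg I a) = gfun k N \<zeta> (avg I a')"
      using uniq_core(1)[OF conjunct1[OF o] conjunct2[OF o] U] k by (simp add: fobj_def)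
    show "\<forall>n\<in>window k N. avg I a n = avg I a' n"
      using G0[OF _ uniq_core(2)[OF conjunct1[OF o] conjunct2[OF o] U]] k by simp
  qed
qed

end
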